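(* Let $H\supseteq\mathbb R$ be a Hardy field with $\partial(H)=H$ (every element of $H$ is the derivative of an element of $H$), and let $K=H[i]\subseteq\mathcal C^{<\infty}[i]$. The following are equivalent: (i) $\operatorname{I}(K)\subseteq K^\dagger$; (ii) $e^f\in K$ for all $f\in K$ with $f\prec1$; (iii) $e^\phi,\cos\phi,\sin\phi\in H$ for all $\phi\in H$ with $\phi\prec1$.
   Context: $\mathcal C^{<\infty}$ is the ring of germs at $+\infty$ of real functions that are $n$-times continuously differentiable for every $n$ (on some interval $(a,+\infty)$, $a$ depending on $n$... i.e. $\bigcap_n\mathcal C^n$), and $\mathcal C^{<\infty}[i]=\mathcal C^{<\infty}+\mathcal C^{<\infty}i$ its complexification, with derivation $(g+hi)'=g'+h'i$. A Hardy field is a subfield of $\mathcal C^{<\infty}$ closed under derivation. For complex germs, $f\preceq g$ iff $|f|\le c|g|$ eventually for some $c>0$; $f\prec g$ iff $g(t)\ne0$ eventually and $f(t)/g(t)\to0$. $\mathcal O_K=\{f\in K:f\preceq1\}$; $\operatorname{I}(K)$ is the $\mathcal O_K$-submodule of $K$ generated by $\{f':f\in\mathcal O_K\}$; $K^\dagger=\{f'/f:f\in K^\times\}$. *)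

theory Defs
  imports "HOL-Analysis.Analysis"
begin

text \<open>Germs at +\<infinity> are represented by functions on the reals; two functions represent
the same germ iff they agree eventually (filter at_top).  A set of germs is represented
by a set of representatives; membership of a germ is membership up to germ equality.\<close>

definition germ_eq :: "(real \<Rightarrow> 'a) \<Rightarrow> (real \<Rightarrow> 'a) \<Rightarrow> bool" where
  "germ_eq f g \<longleftrightarrow> (\<forall>\<^sub>F t in at_top. f t = g t)"

definition in_germs :: "(real \<Rightarrow> 'a) set \<Rightarrow> (real \<Rightarrow> 'a) \<Rightarrow> bool" where
  "in_germs A f \<longleftrightarrow> (\<exists>g\<in>A. germ_eq f g)"

definition Cn_on :: "nat \<Rightarrow> real set \<Rightarrow> (real \<Rightarrow> real) \<Rightarrow> bool" where
  "Cn_on n S f \<longleftrightarrow>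
     (\<forall>k<n. \<forall>x\<in>S. ((deriv ^^ k) f) differentiable (at x)) \<and> continuous_on S ((deriv ^^ n) f)"

definition C_inf :: "(real \<Rightarrow> real) \<Rightarrow> bool" where
  "C_inf f \<longleftrightarrow> (\<forall>n. \<exists>a. Cn_on n {a<..} f)"

definition hardy_field :: "(real \<Rightarrow> real) set \<Rightarrow> bool" where
  "hardy_field H \<longleftrightarrow>
     (\<forall>f\<in>H. C_inf f) \<and>
     in_germs H (\<lambda>_. 0) \<and> in_germs H (\<lambda>_. 1) \<and>
     (\<forall>f\<in>H. \<forall>g\<in>H. in_germs H (\<lambda>t. f t + g t)) \<and>
     (\<forall>f\<in>H. in_germs H (\<lambda>t. - f t)) \<and>
     (\<forall>f\<in>H. \<forall>g\<in>H. in_germs H (\<lambda>t. f t * g t)) \<and>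
     (\<forall>f\<in>H. \<not> germ_eq f (\<lambda>_. 0) \<longrightarrow> (\<exists>g\<in>H. germ_eq (\<lambda>t. f t * g t) (\<lambda>_. 1))) \<and>
     (\<forall>f\<in>H. in_germs H (deriv f))"

definition contains_reals :: "(real \<Rightarrow> real) set \<Rightarrow> bool" where
  "contains_reals H \<longleftrightarrow> (\<forall>c::real. in_germs H (\<lambda>_. c))"

definition cderiv :: "(real \<Rightarrow> complex) \<Rightarrow> real \<Rightarrow> complex" where
  "cderiv f t = complex_of_real (deriv (\<lambda>s. Re (f s)) t) + \<i> * complex_of_real (deriv (\<lambda>s. Im (f s)) t)"

definition cplx_ext :: "(real \<Rightarrow> real) set \<Rightarrow> (real \<Rightarrow> complex) set" where
  "cplx_ext H = {(\<lambda>t. complex_of_real (g t) + \<i> * complex_of_real (h t)) | g h. g \<in> H \<and> h \<in> H}"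

definition preceq :: "(real \<Rightarrow> 'a::real_normed_field) \<Rightarrow> (real \<Rightarrow> 'a) \<Rightarrow> bool" where
  "preceq f g \<longleftrightarrow> (\<exists>c>0. \<forall>\<^sub>F t in at_top. norm (f t) \<le> c * norm (g t))"

definition prec :: "(real \<Rightarrow> 'a::real_normed_field) \<Rightarrow> (real \<Rightarrow> 'a) \<Rightarrow> bool" where
  "prec f g \<longleftrightarrow> (\<forall>\<^sub>F t in at_top. g t \<noteq> 0) \<and> ((\<lambda>t. f t / g t) \<longlongrightarrow> 0) at_top"

definition valring :: "(real \<Rightarrow> complex) set \<Rightarrow> (real \<Rightarrow> complex) set" where
  "valring K = {f. in_germs K f \<and> preceq f (\<lambda>_. 1)}"

text \<open>I(K): the O_K-submodule of K generated by {f' : f \<in> O_K}, i.e. finite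
O_K-linear combinations of such derivatives (up to germ equality).\<close>
definition Ideriv :: "(real \<Rightarrow> complex) set \<Rightarrow> (real \<Rightarrow> complex) set" where
  "Ideriv K = {g. \<exists>n::nat. \<exists>a f. (\<forall>j<n. a j \<in> valring K \<and> f j \<in> valring K) \<and>
                   germ_eq g (\<lambda>t. \<Sum>j<n. a j t * cderiv (f j) t)}"

definition logder :: "(real \<Rightarrow> complex) set \<Rightarrow> (real \<Rightarrow> complex) set" where
  "logder K = {g. \<exists>f\<in>K. \<not> germ_eq f (\<lambda>_. 0) \<and> germ_eq g (\<lambda>t. cderiv f t / f t)}"

end

theory Submission
  imports Defs
begin


lemma germ_eq_refl[simp]: "germ_eq f f" by (simp add: germ_eq_def)
lemma germ_eq_sym: "germ_eq f g \<Longrightarrow> germ_eq g f"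
  by (simp add: germ_eq_def eq_commute)
lemma germ_eq_trans: "germ_eq f g \<Longrightarrow> germ_eq g h \<Longrightarrow> germ_eq f h"
  unfolding germ_eq_def by (auto elim: eventually_elim2)
lemma in_germs_cong: "in_germs A f \<Longrightarrow> germ_eq g f \<Longrightarrow> in_germs A g"
  unfolding in_germs_def by (meson germ_eq_trans)
lemma in_germs_mem: "f \<in> A \<Longrightarrow> in_germs A f"
  unfolding in_germs_def using germ_eq_refl by blast

lemma germ_eq_deriv:
  assumes "germ_eq f g" shows "germ_eq (deriv f) (deriv g)"
proof -
  obtain N where N: "\<forall>t\<ge>N. f t = g t" using assms unfolding germ_eq_def eventually_at_top_linorder by auto
  have "deriv f t = deriv g t" if "t > N" for t
  proof (rule deriv_cong_ev)
    show "eventually (\<lambda>x. f x = g x) (nhds t)"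
      unfolding eventually_nhds using that N by (intro exI[of _ "{N<..}"]) auto
  qed simp
  then show ?thesis unfolding germ_eq_def eventually_at_top_linorder
    by (intro exI[of _ "N+1"]) auto
qed

lemma ev_deriv_cong:
  assumes "germ_eq f g" "\<forall>t>a. (g has_real_derivative deriv g t) (at t)"
  shows "\<exists>b. \<forall>t>b. (f has_real_derivative deriv f t) (at t)"
proof -
  obtain N where N: "\<forall>t\<ge>N. f t = g t" using assms unfolding germ_eq_def eventually_at_top_linorder by auto
  have "(f has_real_derivative deriv f t) (at t)" if "t > max N a" for t
  proof -
    have ev: "eventually (\<lambda>x. f x = g x) (nhds t)"
      unfolding eventually_nhds using that N by (intro exI[of _ "{N<..}"]) auto
    have "deriv f t = deriv g t" by (rule deriv_cong_ev[OF ev refl])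
    moreover have "(g has_real_derivative deriv g t) (at t)" using assms(2) that by auto
    ultimately show ?thesis using DERIV_cong_ev[OF refl ev refl] by simp
  qed
  then show ?thesis by blast
qed

locale HF =
  fixes H :: "(real \<Rightarrow> real) set"
  assumes hf: "hardy_field H" and cr: "contains_reals H"
begin

abbreviation inH where "inH f \<equiv> in_germs H f"

lemma inH_const: "inH (\<lambda>_. c)" using cr unfolding contains_reals_def by auto

lemma rep: assumes "inH f" obtains g where "g \<in> H" "germ_eq f g"
  using assms unfolding in_germs_def by auto

lemma inH_add: assumes "inH f" "inH g" shows "inH (\<lambda>t. f t + g t)"
proof -
  obtain f0 g0 where "f0 \<in> H" "g0 \<in> H" "germ_eq f f0" "germ_eq g g0" using assms rep by metis
  moreover have "inH (\<lambda>t. f0 t + g0 t)" using hf calculation unfolding hardy_field_def by auto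
  moreover have "germ_eq (\<lambda>t. f t + g t) (\<lambda>t. f0 t + g0 t)"
    using calculation(3,4) unfolding germ_eq_def by (auto elim: eventually_elim2)
  ultimately show ?thesis using in_germs_cong by blast
qed

lemma inH_mult: assumes "inH f" "inH g" shows "inH (\<lambda>t. f t * g t)"
proof -
  obtain f0 g0 where "f0 \<in> H" "g0 \<in> H" "germ_eq f f0" "germ_eq g g0" using assms rep by metis
  moreover have "inH (\<lambda>t. f0 t * g0 t)" using hf calculation unfolding hardy_field_def by auto
  moreover have "germ_eq (\<lambda>t. f t * g t) (\<lambda>t. f0 t * g0 t)"
    using calculation(3,4) unfolding germ_eq_def by (auto elim: eventually_elim2)
  ultimately show ?thesis using in_germs_cong by blast
qed

lemma inH_uminus: assumes "inH f" shows "inH (\<lambda>t. - f t)"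
proof -
  obtain f0 where "f0 \<in> H" "germ_eq f f0" using assms rep by metis
  moreover have "inH (\<lambda>t. - f0 t)" using hf calculation unfolding hardy_field_def by auto
  moreover have "germ_eq (\<lambda>t. - f t) (\<lambda>t. - f0 t)"
    using calculation(2) unfolding germ_eq_def by (auto elim: eventually_mono)
  ultimately show ?thesis using in_germs_cong by blast
qed

lemma inH_diff: assumes "inH f" "inH g" shows "inH (\<lambda>t. f t - g t)"
  using inH_add[OF assms(1) inH_uminus[OF assms(2)]] by simp

lemma inH_deriv: assumes "inH f" shows "inH (deriv f)"
proof -
  obtain f0 where "f0 \<in> H" "germ_eq f f0" using assms rep by metis
  moreover have "inH (deriv f0)" using hf calculation unfolding hardy_field_def by auto
  ultimately show ?thesis using in_germs_cong germ_eq_deriv by blast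
qed

lemma inH_ev_deriv: assumes "inH f" shows "\<exists>a. \<forall>t>a. (f has_real_derivative deriv f t) (at t)"
proof -
  obtain f0 where f0: "f0 \<in> H" "germ_eq f f0" using assms rep by metis
  then have "C_inf f0" using hf unfolding hardy_field_def by auto
  then obtain a where "Cn_on 1 {a<..} f0" unfolding C_inf_def by blast
  then have "\<forall>t>a. f0 differentiable (at t)" unfolding Cn_on_def by auto
  then have "\<forall>t>a. (f0 has_real_derivative deriv f0 t) (at t)"
    using DERIV_deriv_iff_real_differentiable by blast
  then show ?thesis using ev_deriv_cong[OF f0(2)] by blast
qed

lemma inH_nonzero: assumes "inH f" "\<not> germ_eq f (\<lambda>_. 0)" shows "\<forall>\<^sub>F t in at_top. f t \<noteq> 0"
proof -
  obtain f0 where f0: "f0 \<in> H" "germ_eq f f0" using assms rep by metis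
  have "\<not> germ_eq f0 (\<lambda>_. 0)" using assms(2) f0(2) germ_eq_trans by blast
  then obtain g where "germ_eq (\<lambda>t. f0 t * g t) (\<lambda>_. 1)" using hf f0 unfolding hardy_field_def by blast
  then show ?thesis using f0(2) unfolding germ_eq_def by (auto elim: eventually_elim2)
qed

lemma inH_sign: assumes "inH f"
  shows "(\<forall>\<^sub>F t in at_top. f t > 0) \<or> (\<forall>\<^sub>F t in at_top. f t < 0) \<or> germ_eq f (\<lambda>_. 0)"
proof (cases "germ_eq f (\<lambda>_. 0)")
  case False
  obtain a where a: "\<forall>t>a. (f has_real_derivative deriv f t) (at t)" using inH_ev_deriv assms by blast
  obtain N where N: "\<forall>t\<ge>N. f t \<noteq> 0" using inH_nonzero[OF assms False] unfolding eventually_at_top_linorder by blast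
  define b where "b = max N (a+1)"
  have cont: "continuous_on {x..y} f" if "b \<le> x" for x y
    using a that unfolding b_def by (intro continuous_at_imp_continuous_on) (metis DERIV_isCont atLeastAtMost_iff less_add_one max.bounded_iff order_less_le_trans)
  have nz: "\<And>t. t \<ge> b \<Longrightarrow> f t \<noteq> 0" using N b_def by auto
  show ?thesis
  proof (cases "f b > 0")
    case True
    have "f t > 0" if tb: "t \<ge> b" for t
    proof (rule ccontr)
      assume "\<not> f t > 0"
      then have "f t \<le> 0" by simp
      then obtain x where "x \<ge> b" "x \<le> t" "f x = 0" using IVT2'[of f t 0 b] tb cont[OF order_refl, of t] True by auto
      then show False using nz by auto
    qed
    then show ?thesis unfolding eventually_at_top_linorder by blast
  next
    case False
    then have fb: "f b < 0" using nz[of b] by auto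
    have "f t < 0" if tb: "t \<ge> b" for t
    proof (rule ccontr)
      assume "\<not> f t < 0"
      then have "f t \<ge> 0" by simp
      then obtain x where "x \<ge> b" "x \<le> t" "f x = 0" using IVT'[of f b 0 t] tb cont[OF order_refl, of t] fb by auto
      then show False using nz by auto
    qed
    then show ?thesis unfolding eventually_at_top_linorder by blast
  qed
qed simp


lemma inH_sgn: assumes "inH f"
  shows "\<exists>s::real. (s = 1 \<or> s = -1) \<and> (\<forall>\<^sub>F t in at_top. s * f t \<ge> 0)"
  using inH_sign[OF assms]
proof (elim disjE)
  assume "\<forall>\<^sub>F t in at_top. f t > 0" then show ?thesis
    by (intro exI[of _ 1]) (auto elim: eventually_mono)
next
  assume "\<forall>\<^sub>F t in at_top. f t < 0" then show ?thesis
    by (intro exI[of _ "-1"]) (auto elim: eventually_mono)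
next
  assume "germ_eq f (\<lambda>_. 0)" then show ?thesis unfolding germ_eq_def
    by (intro exI[of _ 1]) (auto elim: eventually_mono)
qed

end

lemma mono_bdd_tendsto:
  fixes g :: "real \<Rightarrow> real"
  assumes mono: "\<And>x y. a \<le> x \<Longrightarrow> x \<le> y \<Longrightarrow> g x \<le> g y" and bd: "\<And>t. t \<ge> a \<Longrightarrow> g t \<le> B"
  shows "\<exists>l. (g \<longlongrightarrow> l) at_top"
proof -
  define l where "l = (SUP t\<in>{a..}. g t)"
  have bdd: "bdd_above (g ` {a..})" using bd by (intro bdd_aboveI2[where M=B]) auto
  have "(g \<longlongrightarrow> l) at_top"
  proof (rule increasing_tendsto)
    show "\<forall>\<^sub>F n in at_top. g n \<le> l"
      unfolding eventually_at_top_linorder l_def using bdd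
      by (intro exI[of _ a]) (auto intro: cSUP_upper)
  next
    fix x assume "x < l"
    then obtain t where t: "t \<ge> a" "x < g t" unfolding l_def using less_cSUP_iff[OF _ bdd] by auto
    then show "\<forall>\<^sub>F n in at_top. x < g n" unfolding eventually_at_top_linorder
      using mono[of t] by (intro exI[of _ t]) force
  qed
  then show ?thesis by blast
qed

locale HF2 = HF +
  assumes anti: "\<forall>f\<in>H. \<exists>g\<in>H. germ_eq (deriv g) f"
begin

definition AD where "AD w \<longleftrightarrow> (\<exists>z L. inH z \<and> germ_eq (deriv z) w \<and> (z \<longlongrightarrow> L) at_top)"

lemma anti_inH: assumes "inH w" obtains z where "z \<in> H" "germ_eq (deriv z) w"
proof -
  obtain w0 where "w0 \<in> H" "germ_eq w w0" using assms rep by metis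
  then obtain z where "z \<in> H" "germ_eq (deriv z) w0" using anti by blast
  then show ?thesis using that \<open>germ_eq w w0\<close> germ_eq_trans germ_eq_sym by blast
qed

lemma KL:
  assumes "inH \<alpha>" "inH \<beta>" "\<forall>\<^sub>F t in at_top. \<bar>\<alpha> t\<bar> \<le> C" "\<forall>\<^sub>F t in at_top. \<bar>\<beta> t\<bar> \<le> M"
  shows "AD (\<lambda>t. \<alpha> t * deriv \<beta> t)"
proof -
  have "inH (\<lambda>t. \<alpha> t * deriv \<beta> t)" using assms inH_mult inH_deriv by blast
  then obtain z where z: "z \<in> H" "germ_eq (deriv z) (\<lambda>t. \<alpha> t * deriv \<beta> t)" using anti_inH by blast
  have zH: "inH z" using z in_germs_mem by blast
  obtain \<sigma> where \<sigma>: "\<sigma> = 1 \<or> \<sigma> = -1" "\<forall>\<^sub>F t in at_top. \<sigma> * deriv z t \<ge> 0"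
    using inH_sgn[OF inH_deriv[OF zH]] by blast
  obtain s where s: "s = 1 \<or> s = -1" "\<forall>\<^sub>F t in at_top. s * deriv \<beta> t \<ge> 0"
    using inH_sgn[OF inH_deriv[OF assms(2)]] by blast
  obtain a1 where a1: "\<forall>t>a1. (z has_real_derivative deriv z t) (at t)" using inH_ev_deriv[OF zH] by blast
  obtain a2 where a2: "\<forall>t>a2. (\<beta> has_real_derivative deriv \<beta> t) (at t)" using inH_ev_deriv[OF assms(2)] by blast
  have "\<forall>\<^sub>F t in at_top. \<bar>\<alpha> t\<bar> \<le> C \<and> \<bar>\<beta> t\<bar> \<le> M \<and> \<sigma> * deriv z t \<ge> 0 \<and> s * deriv \<beta> t \<ge> 0
      \<and> deriv z t = \<alpha> t * deriv \<beta> t \<and> t > a1 \<and> t > a2"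
    using assms(3,4) \<sigma>(2) s(2) z(2)[unfolded germ_eq_def] eventually_gt_at_top[of a1] eventually_gt_at_top[of a2]
    by eventually_elim auto
  then obtain a where a: "\<And>t. t \<ge> a \<Longrightarrow> \<bar>\<alpha> t\<bar> \<le> C \<and> \<bar>\<beta> t\<bar> \<le> M \<and> \<sigma> * deriv z t \<ge> 0 \<and> s * deriv \<beta> t \<ge> 0
      \<and> deriv z t = \<alpha> t * deriv \<beta> t \<and> t > a1 \<and> t > a2"
    unfolding eventually_at_top_linorder by blast
  have key: "\<sigma> * deriv z t \<le> C * (s * deriv \<beta> t)" if "t \<ge> a" for t
  proof -
    have "\<sigma> * deriv z t = \<bar>deriv z t\<bar>" using a[OF that] \<sigma>(1) by auto
    also have "\<dots> = \<bar>\<alpha> t\<bar> * \<bar>deriv \<beta> t\<bar>" using a[OF that] by (simp add: abs_mult)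
    also have "\<dots> \<le> C * \<bar>deriv \<beta> t\<bar>" using a[OF that] by (simp add: mult_right_mono)
    also have "\<bar>deriv \<beta> t\<bar> = s * deriv \<beta> t" using a[OF that] s(1) by auto
    finally show ?thesis .
  qed
  define h where "h t = C * s * \<beta> t - \<sigma> * z t" for t
  define g where "g t = \<sigma> * z t" for t
  have hmono: "h x \<le> h y" if "a \<le> x" "x \<le> y" for x y
  proof (rule DERIV_nonneg_imp_nondecreasing[OF that(2)])
    fix u assume "x \<le> u" "u \<le> y"
    then have u: "u \<ge> a" using that by simp
    have "DERIV h u :> C * s * deriv \<beta> u - \<sigma> * deriv z u"
      unfolding h_def using a[OF u] a1 a2 by (auto intro!: derivative_eq_intros)
    then show "\<exists>d. DERIV h u :> d \<and> d \<ge> 0" using key[OF u] by (intro exI[of _ "C * s * deriv \<beta> u - \<sigma> * deriv z u"]) (auto simp: algebra_simps)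
  qed
  have gmono: "g x \<le> g y" if "a \<le> x" "x \<le> y" for x y
  proof (rule DERIV_nonneg_imp_nondecreasing[OF that(2)])
    fix u assume "x \<le> u" "u \<le> y"
    then have u: "u \<ge> a" using that by simp
    have "DERIV g u :> \<sigma> * deriv z u"
      unfolding g_def using a[OF u] a1 by (auto intro!: derivative_eq_intros)
    then show "\<exists>d. DERIV g u :> d \<and> d \<ge> 0" using a[OF u] by blast
  qed
  have C0: "C \<ge> 0" using a[of a] by auto
  have gbd: "g t \<le> C * M - h a" if "t \<ge> a" for t
  proof -
    have "h a \<le> h t" using hmono[OF order_refl that] .
    moreover have "C * s * \<beta> t \<le> C * M"
    proof -
      have "s * \<beta> t \<le> M" using a[OF that] s(1) by auto
      then show ?thesis using C0 by (simp add: mult_left_mono mult.assoc)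
    qed
    ultimately show ?thesis unfolding h_def g_def by simp
  qed
  obtain l where l: "(g \<longlongrightarrow> l) at_top" using mono_bdd_tendsto[of a g "C * M - h a"] gmono gbd by blast
  have "((\<lambda>t. \<sigma> * g t) \<longlongrightarrow> \<sigma> * l) at_top" by (intro tendsto_intros l)
  moreover have "(\<lambda>t. \<sigma> * g t) = z" unfolding g_def using \<sigma>(1) by auto
  ultimately have "(z \<longlongrightarrow> \<sigma> * l) at_top" by simp
  then show ?thesis unfolding AD_def using zH z(2) by blast
qed


lemma AD_cong: "AD w \<Longrightarrow> germ_eq v w \<Longrightarrow> AD v"
  unfolding AD_def by (meson germ_eq_sym germ_eq_trans)

lemma AD_zero: "AD (\<lambda>_. 0)"
  unfolding AD_def by (intro exI[of _ "\<lambda>_. 0"] exI[of _ 0]) (auto simp: inH_const)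

lemma AD_add: assumes "AD w1" "AD w2" shows "AD (\<lambda>t. w1 t + w2 t)"
proof -
  obtain z1 L1 where 1: "inH z1" "germ_eq (deriv z1) w1" "(z1 \<longlongrightarrow> L1) at_top" using assms(1) AD_def by blast
  obtain z2 L2 where 2: "inH z2" "germ_eq (deriv z2) w2" "(z2 \<longlongrightarrow> L2) at_top" using assms(2) AD_def by blast
  obtain a1 where a1: "\<forall>t>a1. (z1 has_real_derivative deriv z1 t) (at t)" using inH_ev_deriv[OF 1(1)] by blast
  obtain a2 where a2: "\<forall>t>a2. (z2 has_real_derivative deriv z2 t) (at t)" using inH_ev_deriv[OF 2(1)] by blast
  have "germ_eq (deriv (\<lambda>t. z1 t + z2 t)) (\<lambda>t. deriv z1 t + deriv z2 t)"
    unfolding germ_eq_def using eventually_gt_at_top[of "max a1 a2"]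
  proof eventually_elim
    case (elim t) then show ?case using a1 a2 by (intro DERIV_imp_deriv) (auto intro!: derivative_eq_intros)
  qed
  moreover have "germ_eq (\<lambda>t. deriv z1 t + deriv z2 t) (\<lambda>t. w1 t + w2 t)"
    using 1(2) 2(2) unfolding germ_eq_def by eventually_elim auto
  moreover have "((\<lambda>t. z1 t + z2 t) \<longlongrightarrow> L1 + L2) at_top" by (intro tendsto_intros 1 2)
  ultimately show ?thesis unfolding AD_def using inH_add[OF 1(1) 2(1)] germ_eq_trans by blast
qed

lemma AD_sum: "(\<And>j. j < (n::nat) \<Longrightarrow> AD (T j)) \<Longrightarrow> AD (\<lambda>t. \<Sum>j<n. T j t)"
proof (induction n)
  case 0 then show ?case using AD_zero by simp
next
  case (Suc n) then show ?case using AD_add[of "\<lambda>t. \<Sum>j<n. T j t" "T n"] by simp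
qed

end

lemma Re_mult_cderiv: "Re (a * cderiv f t) = Re a * deriv (\<lambda>s. Re (f s)) t + (- Im a) * deriv (\<lambda>s. Im (f s)) t"
  by (simp add: cderiv_def)
lemma Im_mult_cderiv: "Im (a * cderiv f t) = Re a * deriv (\<lambda>s. Im (f s)) t + Im a * deriv (\<lambda>s. Re (f s)) t"
  by (simp add: cderiv_def)

lemma CD1:
  assumes "((\<lambda>s. Re (Z s)) has_real_derivative a) (at t)" "((\<lambda>s. Im (Z s)) has_real_derivative b) (at t)"
  shows "(Z has_vector_derivative (of_real a + \<i> * of_real b)) (at t)"
proof -
  have 1: "((\<lambda>s. complex_of_real (Re (Z s))) has_vector_derivative of_real a) (at t)"
    using assms(1) by (rule has_vector_derivative_of_real)
  have 2: "((\<lambda>s. \<i> * complex_of_real (Im (Z s))) has_vector_derivative \<i> * of_real b) (at t)"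
    using bounded_linear.has_vector_derivative[OF bounded_linear_mult_right[of \<i>] has_vector_derivative_of_real[OF assms(2)]] .
  have "((\<lambda>s. complex_of_real (Re (Z s)) + \<i> * complex_of_real (Im (Z s))) has_vector_derivative (of_real a + \<i> * of_real b)) (at t)"
    using has_vector_derivative_add[OF 1 2] .
  moreover have "(\<lambda>s. complex_of_real (Re (Z s)) + \<i> * complex_of_real (Im (Z s))) = Z"
    by (rule ext) (simp add: complex_eq_iff)
  ultimately show ?thesis by simp
qed

lemma CD2:
  assumes "(W has_vector_derivative D) (at t)"
  shows "((\<lambda>s. Re (W s)) has_real_derivative Re D) (at t)" "((\<lambda>s. Im (W s)) has_real_derivative Im D) (at t)"
  using bounded_linear.has_vector_derivative[OF bounded_linear_Re assms]
    bounded_linear.has_vector_derivative[OF bounded_linear_Im assms]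
  by (simp_all add: has_real_derivative_iff_has_vector_derivative)

lemma cderiv_of_vec: assumes "(W has_vector_derivative D) (at t)" shows "cderiv W t = D"
  using DERIV_imp_deriv[OF CD2(1)[OF assms]] DERIV_imp_deriv[OF CD2(2)[OF assms]] unfolding cderiv_def by (simp add: complex_eq_iff)

lemma cderiv_vec:
  assumes "((\<lambda>s. Re (Z s)) has_real_derivative deriv (\<lambda>s. Re (Z s)) t) (at t)"
    "((\<lambda>s. Im (Z s)) has_real_derivative deriv (\<lambda>s. Im (Z s)) t) (at t)"
  shows "(Z has_vector_derivative cderiv Z t) (at t)"
  using CD1[OF assms] unfolding cderiv_def .

lemma exp_vec: fixes Z :: "real \<Rightarrow> complex" assumes "(Z has_vector_derivative D) (at t)"
  shows "((\<lambda>s. exp (Z s)) has_vector_derivative exp (Z t) * D) (at t)"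
  using field_vector_diff_chain_at[OF assms DERIV_exp[of "Z t"]] by (simp add: o_def mult.commute)

lemma cderiv_germ: "germ_eq F G \<Longrightarrow> germ_eq (cderiv F) (cderiv G)"
proof -
  assume a: "germ_eq F G"
  have "germ_eq (\<lambda>s. Re (F s)) (\<lambda>s. Re (G s))" "germ_eq (\<lambda>s. Im (F s)) (\<lambda>s. Im (G s))"
    using a unfolding germ_eq_def by (auto elim: eventually_mono)
  then have "germ_eq (deriv (\<lambda>s. Re (F s))) (deriv (\<lambda>s. Re (G s)))" "germ_eq (deriv (\<lambda>s. Im (F s))) (deriv (\<lambda>s. Im (G s)))"
    using germ_eq_deriv by blast+
  then show ?thesis unfolding germ_eq_def cderiv_def by eventually_elim simp
qed

context HF begin

lemma inK_iff: "in_germs (cplx_ext H) F \<longleftrightarrow> inH (\<lambda>t. Re (F t)) \<and> inH (\<lambda>t. Im (F t))"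
proof
  assume "in_germs (cplx_ext H) F"
  then obtain g h where gh: "g \<in> H" "h \<in> H" "germ_eq F (\<lambda>t. complex_of_real (g t) + \<i> * complex_of_real (h t))"
    unfolding in_germs_def cplx_ext_def by blast
  have "germ_eq (\<lambda>t. Re (F t)) g" "germ_eq (\<lambda>t. Im (F t)) h"
    using gh(3) unfolding germ_eq_def by (auto elim: eventually_mono)
  then show "inH (\<lambda>t. Re (F t)) \<and> inH (\<lambda>t. Im (F t))" using gh in_germs_mem in_germs_cong by blast
next
  assume "inH (\<lambda>t. Re (F t)) \<and> inH (\<lambda>t. Im (F t))"
  then obtain g h where gh: "g \<in> H" "h \<in> H" "germ_eq (\<lambda>t. Re (F t)) g" "germ_eq (\<lambda>t. Im (F t)) h"
    using rep by metis
  have "germ_eq F (\<lambda>t. complex_of_real (g t) + \<i> * complex_of_real (h t))"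
    using gh(3,4) unfolding germ_eq_def by eventually_elim (simp add: complex_eq_iff)
  moreover have "(\<lambda>t. complex_of_real (g t) + \<i> * complex_of_real (h t)) \<in> cplx_ext H"
    unfolding cplx_ext_def using gh by blast
  ultimately show "in_germs (cplx_ext H) F" unfolding in_germs_def by blast
qed

lemma inK_ev_vderiv: assumes "in_germs (cplx_ext H) F"
  shows "\<exists>a. \<forall>t>a. (F has_vector_derivative cderiv F t) (at t)"
proof -
  obtain a1 where a1: "\<forall>t>a1. ((\<lambda>s. Re (F s)) has_real_derivative deriv (\<lambda>s. Re (F s)) t) (at t)"
    using inH_ev_deriv assms inK_iff by blast
  obtain a2 where a2: "\<forall>t>a2. ((\<lambda>s. Im (F s)) has_real_derivative deriv (\<lambda>s. Im (F s)) t) (at t)"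
    using inH_ev_deriv assms inK_iff by blast
  show ?thesis using a1 a2 cderiv_vec by (intro exI[of _ "max a1 a2"]) auto
qed

lemma inK_nonzero: assumes "in_germs (cplx_ext H) F" "\<not> germ_eq F (\<lambda>_. 0)"
  shows "\<forall>\<^sub>F t in at_top. F t \<noteq> 0"
proof -
  have R: "inH (\<lambda>t. Re (F t))" and I: "inH (\<lambda>t. Im (F t))" using assms(1) inK_iff by auto
  show ?thesis
  proof (cases "germ_eq (\<lambda>t. Re (F t)) (\<lambda>_. 0)")
    case True
    show ?thesis
    proof (cases "germ_eq (\<lambda>t. Im (F t)) (\<lambda>_. 0)")
      case True2: True
      have "germ_eq F (\<lambda>_. 0)" using True True2 unfolding germ_eq_def by eventually_elim (simp add: complex_eq_iff)
      then show ?thesis using assms(2) by blast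
    next
      case False
      from inH_nonzero[OF I False] show ?thesis by (rule eventually_mono) auto
    qed
  next
    case False
    from inH_nonzero[OF R False] show ?thesis by (rule eventually_mono) auto
  qed
qed

lemma inK_cmult: assumes "in_germs (cplx_ext H) F" shows "in_germs (cplx_ext H) (\<lambda>t. F t * d)"
proof -
  have R: "inH (\<lambda>t. Re (F t))" and I: "inH (\<lambda>t. Im (F t))" using assms(1) inK_iff by auto
  have "inH (\<lambda>t. Re (F t) * Re d - Im (F t) * Im d)"
    by (intro inH_diff inH_mult R I inH_const)
  moreover have "inH (\<lambda>t. Re (F t) * Im d + Im (F t) * Re d)"
    by (intro inH_add inH_mult R I inH_const)
  ultimately show ?thesis unfolding inK_iff by simp
qed

end

context HF2 begin
end



context HF begin

lemma in_valring_bounded: assumes "F \<in> valring (cplx_ext H)"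
  shows "inH (\<lambda>t. Re (F t))" "inH (\<lambda>t. Im (F t))"
    "\<exists>C. \<forall>\<^sub>F t in at_top. \<bar>Re (F t)\<bar> \<le> C" "\<exists>C. \<forall>\<^sub>F t in at_top. \<bar>Im (F t)\<bar> \<le> C"
proof -
  show "inH (\<lambda>t. Re (F t))" "inH (\<lambda>t. Im (F t))" using assms inK_iff unfolding valring_def by auto
  obtain c where c: "\<forall>\<^sub>F t in at_top. norm (F t) \<le> c * norm (1::complex)" using assms unfolding valring_def preceq_def by blast
  show "\<exists>C. \<forall>\<^sub>F t in at_top. \<bar>Re (F t)\<bar> \<le> C" using c abs_Re_le_cmod
    by (intro exI[of _ c]) (auto elim!: eventually_mono intro: order_trans)
  show "\<exists>C. \<forall>\<^sub>F t in at_top. \<bar>Im (F t)\<bar> \<le> C" using c abs_Im_le_cmod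
    by (intro exI[of _ c]) (auto elim!: eventually_mono intro: order_trans)
qed

lemma ii_to_iii:
  assumes ii: "\<forall>f\<in>cplx_ext H. prec f (\<lambda>_. 1) \<longrightarrow> in_germs (cplx_ext H) (\<lambda>t. exp (f t))"
    and \<phi>: "\<phi> \<in> H" "prec \<phi> (\<lambda>_. 1)"
  shows "inH (\<lambda>t. exp (\<phi> t)) \<and> inH (\<lambda>t. cos (\<phi> t)) \<and> inH (\<lambda>t. sin (\<phi> t))"
proof -
  obtain z where z: "z \<in> H" "germ_eq (\<lambda>_. 0) z" using inH_const[of 0] rep by metis
  have zlim: "(z \<longlongrightarrow> 0) at_top" using z(2) unfolding germ_eq_def
    by (rule Lim_transform_eventually[OF tendsto_const])
  have \<phi>lim: "(\<phi> \<longlongrightarrow> 0) at_top" using \<phi>(2) unfolding prec_def by simp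
  define F1 where "F1 = (\<lambda>t. complex_of_real (\<phi> t) + \<i> * complex_of_real (z t))"
  define F2 where "F2 = (\<lambda>t. complex_of_real (z t) + \<i> * complex_of_real (\<phi> t))"
  have F: "F1 \<in> cplx_ext H" "F2 \<in> cplx_ext H" unfolding F1_def F2_def cplx_ext_def using z \<phi> by blast+
  have "(F1 \<longlongrightarrow> 0) at_top" "(F2 \<longlongrightarrow> 0) at_top" unfolding F1_def F2_def
    using tendsto_add[OF tendsto_of_real[OF \<phi>lim] tendsto_mult[OF tendsto_const tendsto_of_real[OF zlim]]]
      tendsto_add[OF tendsto_of_real[OF zlim] tendsto_mult[OF tendsto_const tendsto_of_real[OF \<phi>lim]]]
    by simp_all
  then have "prec F1 (\<lambda>_. 1)" "prec F2 (\<lambda>_. 1)" unfolding prec_def by simp_all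
  then have e: "in_germs (cplx_ext H) (\<lambda>t. exp (F1 t))" "in_germs (cplx_ext H) (\<lambda>t. exp (F2 t))"
    using ii F by blast+
  have ev: "\<forall>\<^sub>F t in at_top. z t = 0" using z(2) unfolding germ_eq_def by (auto elim: eventually_mono)
  have "inH (\<lambda>t. Re (exp (F1 t)))" "inH (\<lambda>t. Re (exp (F2 t)))" "inH (\<lambda>t. Im (exp (F2 t)))"
    using e by (simp_all add: inK_iff)
  moreover have "germ_eq (\<lambda>t. exp (\<phi> t)) (\<lambda>t. Re (exp (F1 t)))"
    "germ_eq (\<lambda>t. cos (\<phi> t)) (\<lambda>t. Re (exp (F2 t)))" "germ_eq (\<lambda>t. sin (\<phi> t)) (\<lambda>t. Im (exp (F2 t)))"
    unfolding germ_eq_def using ev by (auto elim!: eventually_mono simp: F1_def F2_def Re_exp Im_exp)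
  ultimately show ?thesis using in_germs_cong by blast
qed

lemma iii_to_ii:
  assumes iii: "\<forall>\<phi>\<in>H. prec \<phi> (\<lambda>_. 1) \<longrightarrow> inH (\<lambda>t. exp (\<phi> t)) \<and> inH (\<lambda>t. cos (\<phi> t)) \<and> inH (\<lambda>t. sin (\<phi> t))"
    and F: "F \<in> cplx_ext H" "prec F (\<lambda>_. 1)"
  shows "in_germs (cplx_ext H) (\<lambda>t. exp (F t))"
proof -
  obtain g h where gh: "g \<in> H" "h \<in> H" "F = (\<lambda>t. complex_of_real (g t) + \<i> * complex_of_real (h t))"
    using F(1) unfolding cplx_ext_def by blast
  have Fl: "(F \<longlongrightarrow> 0) at_top" using F(2) unfolding prec_def by simp
  have "((\<lambda>t. Re (F t)) \<longlongrightarrow> 0) at_top" "((\<lambda>t. Im (F t)) \<longlongrightarrow> 0) at_top"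
    using tendsto_Re[OF Fl] tendsto_Im[OF Fl] by simp_all
  then have "(g \<longlongrightarrow> 0) at_top" "(h \<longlongrightarrow> 0) at_top" using gh(3) by simp_all
  then have "prec g (\<lambda>_. 1)" "prec h (\<lambda>_. 1)" unfolding prec_def by simp_all
  then have "inH (\<lambda>t. exp (g t))" "inH (\<lambda>t. cos (h t))" "inH (\<lambda>t. sin (h t))" using iii gh by blast+
  then have "inH (\<lambda>t. exp (g t) * cos (h t))" "inH (\<lambda>t. exp (g t) * sin (h t))" using inH_mult by blast+
  then show ?thesis unfolding inK_iff using gh(3) by (simp add: Re_exp Im_exp)
qed

lemma i_to_ii:
  assumes i: "Ideriv (cplx_ext H) \<subseteq> logder (cplx_ext H)"
    and F: "F \<in> cplx_ext H" "prec F (\<lambda>_. 1)"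
  shows "in_germs (cplx_ext H) (\<lambda>t. exp (F t))"
proof -
  let ?K = "cplx_ext H"
  have Fl: "(F \<longlongrightarrow> 0) at_top" using F(2) unfolding prec_def by simp
  have FK: "in_germs ?K F" using F(1) in_germs_mem by blast
  have "\<forall>\<^sub>F t in at_top. norm (F t) < 1" using order_tendstoD(2)[OF tendsto_norm[OF Fl]] by simp
  then have "preceq F (\<lambda>_. 1)" unfolding preceq_def
    by (intro exI[of _ 1]) (auto elim: eventually_mono)
  then have Fv: "F \<in> valring ?K" unfolding valring_def using FK by blast
  have "in_germs ?K (\<lambda>_. 1)" unfolding inK_iff using inH_const by simp
  moreover have "preceq (\<lambda>_. 1::complex) (\<lambda>_. 1)" unfolding preceq_def by (intro exI[of _ 1]) simp
  ultimately have 1: "(\<lambda>_. 1) \<in> valring ?K" unfolding valring_def by blast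
  have "cderiv F \<in> Ideriv ?K" unfolding Ideriv_def
    by (rule CollectI, rule exI[of _ 1], rule exI[of _ "\<lambda>_. \<lambda>_. 1"], rule exI[of _ "\<lambda>_. F"])
      (use Fv 1 in simp)
  then have "cderiv F \<in> logder ?K" using i by blast
  then obtain Y where Y: "Y \<in> ?K" "\<not> germ_eq Y (\<lambda>_. 0)" "germ_eq (cderiv F) (\<lambda>t. cderiv Y t / Y t)"
    unfolding logder_def by blast
  have YK: "in_germs ?K Y" using Y(1) in_germs_mem by blast
  obtain a1 where a1: "\<forall>t>a1. (F has_vector_derivative cderiv F t) (at t)" using inK_ev_vderiv[OF FK] by blast
  obtain a2 where a2: "\<forall>t>a2. (Y has_vector_derivative cderiv Y t) (at t)" using inK_ev_vderiv[OF YK] by blast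
  have "\<forall>\<^sub>F t in at_top. Y t \<noteq> 0 \<and> cderiv F t = cderiv Y t / Y t \<and> t > a1 \<and> t > a2"
    using inK_nonzero[OF YK Y(2)] Y(3)[unfolded germ_eq_def] eventually_gt_at_top[of a1] eventually_gt_at_top[of a2]
    by eventually_elim auto
  then obtain N where N: "\<And>t. t \<ge> N \<Longrightarrow> Y t \<noteq> 0 \<and> cderiv F t = cderiv Y t / Y t \<and> t > a1 \<and> t > a2"
    unfolding eventually_at_top_linorder by blast
  define u where "u s = Y s * exp (- F s)" for s
  have "(u has_vector_derivative 0) (at t within {N<..})" if "t \<in> {N<..}" for t
  proof -
    have t: "Y t \<noteq> 0" "cderiv F t = cderiv Y t / Y t" "t > a1" "t > a2" using N[of t] that by auto
    have dF: "((\<lambda>s. - F s) has_vector_derivative - cderiv F t) (at t)"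
      using a1 t by (intro has_vector_derivative_minus) auto
    have "(u has_vector_derivative (Y t * (exp (- F t) * (- cderiv F t)) + cderiv Y t * exp (- F t))) (at t)"
      unfolding u_def using has_vector_derivative_mult[OF _ exp_vec[OF dF], of Y "cderiv Y t"] a2 t by auto
    moreover have "Y t * (exp (- F t) * (- cderiv F t)) + cderiv Y t * exp (- F t) = 0"
      using t by (simp add: field_simps)
    ultimately show ?thesis by (auto intro: has_vector_derivative_at_within)
  qed
  then obtain c where c: "\<And>x. x \<in> {N<..} \<Longrightarrow> u x = c"
    using has_vector_derivative_zero_constant[of "{N<..}" u] by auto
  have "c \<noteq> 0" using c[of "N+1"] N[of "N+1"] unfolding u_def by auto
  have ex: "exp (F t) = Y t * inverse c" if "t > N" for t
  proof -
    have "Y t * exp (- F t) = c" using c[of t] that unfolding u_def by auto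
    then have "Y t = c * exp (F t)" by (metis exp_minus_inverse mult.commute mult.left_commute mult_1_right)
    then show ?thesis using \<open>c \<noteq> 0\<close> by simp
  qed
  have "germ_eq (\<lambda>t. exp (F t)) (\<lambda>t. Y t * inverse c)" unfolding germ_eq_def
    by (rule eventually_mono[OF eventually_gt_at_top[of N]]) (rule ex)
  then show ?thesis using inK_cmult[OF YK] in_germs_cong by blast
qed

end

context HF2 begin

lemma KL_v: assumes "A \<in> valring (cplx_ext H)" "B \<in> valring (cplx_ext H)"
  shows "AD (\<lambda>t. Re (A t) * deriv (\<lambda>s. Re (B s)) t)" "AD (\<lambda>t. Re (A t) * deriv (\<lambda>s. Im (B s)) t)"
        "AD (\<lambda>t. Im (A t) * deriv (\<lambda>s. Re (B s)) t)" "AD (\<lambda>t. (- Im (A t)) * deriv (\<lambda>s. Im (B s)) t)"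
proof -
  note a = in_valring_bounded[OF assms(1)] and b = in_valring_bounded[OF assms(2)]
  obtain C1 where C1: "\<forall>\<^sub>F t in at_top. \<bar>Re (A t)\<bar> \<le> C1" using a(3) by blast
  obtain C2 where C2: "\<forall>\<^sub>F t in at_top. \<bar>Im (A t)\<bar> \<le> C2" using a(4) by blast
  obtain M1 where M1: "\<forall>\<^sub>F t in at_top. \<bar>Re (B t)\<bar> \<le> M1" using b(3) by blast
  obtain M2 where M2: "\<forall>\<^sub>F t in at_top. \<bar>Im (B t)\<bar> \<le> M2" using b(4) by blast
  have C2': "\<forall>\<^sub>F t in at_top. \<bar>- Im (A t)\<bar> \<le> C2" using C2 by simp
  show "AD (\<lambda>t. Re (A t) * deriv (\<lambda>s. Re (B s)) t)" by (rule KL[OF a(1) b(1) C1 M1])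
  show "AD (\<lambda>t. Re (A t) * deriv (\<lambda>s. Im (B s)) t)" by (rule KL[OF a(1) b(2) C1 M2])
  show "AD (\<lambda>t. Im (A t) * deriv (\<lambda>s. Re (B s)) t)" by (rule KL[OF a(2) b(1) C2 M1])
  show "AD (\<lambda>t. (- Im (A t)) * deriv (\<lambda>s. Im (B s)) t)" by (rule KL[OF inH_uminus[OF a(2)] b(2) C2' M2])
qed

lemma AD_parts: assumes "g \<in> Ideriv (cplx_ext H)"
  shows "AD (\<lambda>t. Re (g t))" "AD (\<lambda>t. Im (g t))"
proof -
  obtain n :: nat and a f where af: "\<forall>j<n. a j \<in> valring (cplx_ext H) \<and> f j \<in> valring (cplx_ext H)"
    and g: "germ_eq g (\<lambda>t. \<Sum>j<n. a j t * cderiv (f j) t)"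
    using assms unfolding Ideriv_def by force
  have "AD (\<lambda>t. \<Sum>j<n. Re (a j t) * deriv (\<lambda>s. Re (f j s)) t + (- Im (a j t)) * deriv (\<lambda>s. Im (f j s)) t)"
    by (rule AD_sum, rule AD_add) (use af KL_v in auto)
  moreover have "germ_eq (\<lambda>t. Re (g t)) (\<lambda>t. \<Sum>j<n. Re (a j t) * deriv (\<lambda>s. Re (f j s)) t + (- Im (a j t)) * deriv (\<lambda>s. Im (f j s)) t)"
    using g unfolding germ_eq_def by eventually_elim (simp only: Re_sum Re_mult_cderiv)
  ultimately show "AD (\<lambda>t. Re (g t))" using AD_cong by blast
  have "AD (\<lambda>t. \<Sum>j<n. Re (a j t) * deriv (\<lambda>s. Im (f j s)) t + Im (a j t) * deriv (\<lambda>s. Re (f j s)) t)"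
    by (rule AD_sum, rule AD_add) (use af KL_v in auto)
  moreover have "germ_eq (\<lambda>t. Im (g t)) (\<lambda>t. \<Sum>j<n. Re (a j t) * deriv (\<lambda>s. Im (f j s)) t + Im (a j t) * deriv (\<lambda>s. Re (f j s)) t)"
    using g unfolding germ_eq_def by eventually_elim (simp only: Im_sum Im_mult_cderiv)
  ultimately show "AD (\<lambda>t. Im (g t))" using AD_cong by blast
qed

lemma AD_shift: assumes "AD w"
  obtains p L where "p \<in> H" "(p \<longlongrightarrow> 0) at_top" "germ_eq (deriv p) w"
proof -
  obtain z L where z: "inH z" "germ_eq (deriv z) w" "(z \<longlongrightarrow> L) at_top" using assms AD_def by blast
  have "inH (\<lambda>t. z t - L)" using inH_diff[OF z(1) inH_const] .
  then obtain p where p: "p \<in> H" "germ_eq (\<lambda>t. z t - L) p" using rep by metis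
  have "((\<lambda>t. z t - L) \<longlongrightarrow> 0) at_top" using tendsto_diff[OF z(3) tendsto_const[of L]] by simp
  then have "(p \<longlongrightarrow> 0) at_top" using p(2) unfolding germ_eq_def by (rule Lim_transform_eventually)
  moreover
  obtain a where a: "\<forall>t>a. (z has_real_derivative deriv z t) (at t)" using inH_ev_deriv[OF z(1)] by blast
  have "germ_eq (deriv (\<lambda>t. z t - L)) (deriv z)" unfolding germ_eq_def using eventually_gt_at_top[of a]
  proof eventually_elim
    case (elim t) then show ?case using a by (intro DERIV_imp_deriv) (auto intro!: derivative_eq_intros)
  qed
  then have "germ_eq (deriv p) w" using germ_eq_deriv[OF p(2)] z(2) germ_eq_sym germ_eq_trans by metis
  ultimately show ?thesis using that p(1) by blast
qed

lemma ii_to_i: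
  assumes ii: "\<forall>f\<in>cplx_ext H. prec f (\<lambda>_. 1) \<longrightarrow> in_germs (cplx_ext H) (\<lambda>t. exp (f t))"
    and g: "g \<in> Ideriv (cplx_ext H)"
  shows "g \<in> logder (cplx_ext H)"
proof -
  let ?K = "cplx_ext H"
  obtain p where p: "p \<in> H" "(p \<longlongrightarrow> 0) at_top" "germ_eq (deriv p) (\<lambda>t. Re (g t))"
    using AD_shift[OF AD_parts(1)[OF g]] by blast
  obtain q where q: "q \<in> H" "(q \<longlongrightarrow> 0) at_top" "germ_eq (deriv q) (\<lambda>t. Im (g t))"
    using AD_shift[OF AD_parts(2)[OF g]] by blast
  define Z where "Z = (\<lambda>t. complex_of_real (p t) + \<i> * complex_of_real (q t))"
  have ZK: "Z \<in> ?K" unfolding Z_def cplx_ext_def using p q by blast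
  have "(Z \<longlongrightarrow> 0) at_top" unfolding Z_def
    using tendsto_add[OF tendsto_of_real[OF p(2)] tendsto_mult[OF tendsto_const tendsto_of_real[OF q(2)]]] by simp
  then have "prec Z (\<lambda>_. 1)" unfolding prec_def by simp
  then have "in_germs ?K (\<lambda>t. exp (Z t))" using ii ZK by blast
  then obtain Y where Y: "Y \<in> ?K" "germ_eq (\<lambda>t. exp (Z t)) Y" unfolding in_germs_def by blast
  have Ynz: "\<not> germ_eq Y (\<lambda>_. 0)"
  proof
    assume "germ_eq Y (\<lambda>_. 0)"
    then have "germ_eq (\<lambda>t. exp (Z t)) (\<lambda>_. 0)" using Y(2) germ_eq_trans by blast
    then show False unfolding germ_eq_def by simp
  qed
  obtain a1 where a1: "\<forall>t>a1. (p has_real_derivative deriv p t) (at t)" using inH_ev_deriv in_germs_mem p(1) by blast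
  obtain a2 where a2: "\<forall>t>a2. (q has_real_derivative deriv q t) (at t)" using inH_ev_deriv in_germs_mem q(1) by blast
  have cY: "germ_eq (cderiv Y) (cderiv (\<lambda>t. exp (Z t)))" using cderiv_germ[OF Y(2)] germ_eq_sym by blast
  have "germ_eq g (\<lambda>t. cderiv Y t / Y t)" unfolding germ_eq_def
    using cY[unfolded germ_eq_def] Y(2)[unfolded germ_eq_def] p(3)[unfolded germ_eq_def] q(3)[unfolded germ_eq_def]
      eventually_gt_at_top[of a1] eventually_gt_at_top[of a2]
  proof eventually_elim
    case (elim t)
    have hp: "(p has_real_derivative deriv p t) (at t)" using a1 \<open>a1 < t\<close> by blast
    have hq: "(q has_real_derivative deriv q t) (at t)" using a2 \<open>a2 < t\<close> by blast
    have "((\<lambda>s. Re (Z s)) has_real_derivative deriv p t) (at t)" "((\<lambda>s. Im (Z s)) has_real_derivative deriv q t) (at t)"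
      by (simp_all add: Z_def hp hq)
    then have "(Z has_vector_derivative (of_real (deriv p t) + \<i> * of_real (deriv q t))) (at t)" by (rule CD1)
    moreover have "of_real (deriv p t) + \<i> * of_real (deriv q t) = g t" using elim by (simp add: complex_eq_iff)
    ultimately have "(Z has_vector_derivative g t) (at t)" by simp
    then have "cderiv (\<lambda>t. exp (Z t)) t = exp (Z t) * g t" using exp_vec cderiv_of_vec by blast
    then show ?case using elim exp_not_eq_zero[of "Z t"] by simp
  qed
  then show ?thesis unfolding logder_def using Y(1) Ynz by blast
qed

end

theorem mainTheorem13:
  fixes H :: "(real \<Rightarrow> real) set"
  assumes "hardy_field H"
    and "contains_reals H"
    and "\<forall>f\<in>H. \<exists>g\<in>H. germ_eq (deriv g) f"
  defines "K \<equiv> cplx_ext H"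
  shows "(Ideriv K \<subseteq> logder K
          \<longleftrightarrow> (\<forall>f\<in>K. prec f (\<lambda>_. 1) \<longrightarrow> in_germs K (\<lambda>t. exp (f t))))
       \<and> ((\<forall>f\<in>K. prec f (\<lambda>_. 1) \<longrightarrow> in_germs K (\<lambda>t. exp (f t)))
          \<longleftrightarrow> (\<forall>\<phi>\<in>H. prec \<phi> (\<lambda>_. 1) \<longrightarrow>
                 in_germs H (\<lambda>t. exp (\<phi> t)) \<and> in_germs H (\<lambda>t. cos (\<phi> t)) \<and>
                 in_germs H (\<lambda>t. sin (\<phi> t))))"
proof -
  interpret HF2 H using assms(1-3) by unfold_locales
  show ?thesis unfolding K_def
    using i_to_ii ii_to_i ii_to_iii iii_to_ii by blast
qed


end
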